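(* Let $M$ be a matroid on a finite set $E$ with $r(M)>0$. Then $F(M)$ is a partition of $\cup\mathcal{B}(M)$ if and only if $M$ is a unique expansion matroid.
   Context: A matroid $M=(E,\mathcal{I})$ has independent sets $\mathcal{I}(M)$; $\mathcal{B}(M)$ denotes its family of bases (maximal independent sets), $r(M)$ the common cardinality of its bases, and $r(X)$ the rank of $X\subseteq E$ (maximum size of an independent subset of $X$). For a set family $S$, $\cup S=\bigcup_{X\in S}X$. A partition of a set $U$ is a family of nonempty, pairwise disjoint subsets of $U$ whose union is $U$. For $r(M)>0$: the secondary base family is $s(M)=\{A\in\mathcal{I}(M): |A|=r(M)-1\}$; for $X\subseteq E$, $K_M(X)=\{a\in E: r(X\cup\{a\})=r(X)+1\}$; the forming base family is $F(M)=\{K_M(X): X\in s(M)\}$. $M$ is a unique expansion matroid if for every $B\in\mathcal{B}(M)$ and every $A\in s(M)$, whenever $e_1,e_2\in B$ satisfy $A\cup\{e_1\}\in\mathcal{B}(M)$ and $A\cup\{e_2\}\in\mathcal{B}(M)$, then $e_1=e_2$. *)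

theory Defs
  imports Main "HOL-Library.Disjoint_Sets"
begin

definition matroid :: "'a set \<Rightarrow> ('a set \<Rightarrow> bool) \<Rightarrow> bool" where
  "matroid E indep \<longleftrightarrow>
     (\<forall>X. indep X \<longrightarrow> X \<subseteq> E) \<and>
     indep {} \<and>
     (\<forall>X Y. indep X \<and> Y \<subseteq> X \<longrightarrow> indep Y) \<and>
     (\<forall>X Y. indep X \<and> indep Y \<and> card X < card Y \<longrightarrow> (\<exists>e\<in>Y - X. indep (insert e X)))"

definition bases :: "('a set \<Rightarrow> bool) \<Rightarrow> 'a set set" where
  "bases indep = {B. indep B \<and> (\<forall>C. indep C \<and> B \<subseteq> C \<longrightarrow> C = B)}"

definition mrank :: "('a set \<Rightarrow> bool) \<Rightarrow> 'a set \<Rightarrow> nat" where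
  "mrank indep X = Max {card Y | Y. Y \<subseteq> X \<and> indep Y}"

definition matroid_rank :: "'a set \<Rightarrow> ('a set \<Rightarrow> bool) \<Rightarrow> nat" where
  "matroid_rank E indep = mrank indep E"

definition secondary_bases :: "'a set \<Rightarrow> ('a set \<Rightarrow> bool) \<Rightarrow> 'a set set" where
  "secondary_bases E indep = {A. indep A \<and> card A = matroid_rank E indep - 1}"

definition Kset :: "'a set \<Rightarrow> ('a set \<Rightarrow> bool) \<Rightarrow> 'a set \<Rightarrow> 'a set" where
  "Kset E indep X = {a \<in> E. mrank indep (X \<union> {a}) = mrank indep X + 1}"

definition forming_bases :: "'a set \<Rightarrow> ('a set \<Rightarrow> bool) \<Rightarrow> 'a set set" where
  "forming_bases E indep = Kset E indep ` secondary_bases E indep"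

definition unique_expansion :: "'a set \<Rightarrow> ('a set \<Rightarrow> bool) \<Rightarrow> bool" where
  "unique_expansion E indep \<longleftrightarrow>
     (\<forall>B \<in> bases indep. \<forall>A \<in> secondary_bases E indep. \<forall>e1 e2.
        e1 \<in> B \<and> e2 \<in> B \<and> A \<union> {e1} \<in> bases indep \<and> A \<union> {e2} \<in> bases indep
        \<longrightarrow> e1 = e2)"

end

theory Submission
  imports Defs
begin

context
  fixes E :: "'a set" and indep :: "'a set \<Rightarrow> bool"
  assumes fin: "finite E" and M: "matroid E indep"
begin

lemma M1: "indep X \<Longrightarrow> X \<subseteq> E" using M unfolding matroid_def by blast
lemma M2: "indep {}" using M unfolding matroid_def by blast
lemma M3: "indep X \<Longrightarrow> Y \<subseteq> X \<Longrightarrow> indep Y" using M unfolding matroid_def by blast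
lemma M4: "indep X \<Longrightarrow> indep Y \<Longrightarrow> card X < card Y \<Longrightarrow> \<exists>e\<in>Y - X. indep (insert e X)"
  using M unfolding matroid_def by blast
lemma finI: "indep X \<Longrightarrow> finite X" using M1 fin finite_subset by blast

lemma mrank_fin: "finite Z \<Longrightarrow> finite {card Y |Y. Y \<subseteq> Z \<and> indep Y}"
  by (rule finite_subset[of _ "card ` Pow Z"]) auto

lemma mrank_ge: "finite Z \<Longrightarrow> Y \<subseteq> Z \<Longrightarrow> indep Y \<Longrightarrow> card Y \<le> mrank indep Z"
  unfolding mrank_def by (rule Max_ge) (auto simp: mrank_fin)

lemma mrank_le: "finite Z \<Longrightarrow> (\<And>Y. Y \<subseteq> Z \<Longrightarrow> indep Y \<Longrightarrow> card Y \<le> k) \<Longrightarrow> mrank indep Z \<le> k"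
  unfolding mrank_def using mrank_fin[of Z] M2 by (subst Max_le_iff) auto

lemma mrank_indep: "indep X \<Longrightarrow> mrank indep X = card X"
proof -
  assume i: "indep X"
  have f: "finite X" using finI[OF i] .
  have "card X \<le> mrank indep X" using mrank_ge[OF f _ i] by blast
  moreover have "mrank indep X \<le> card X" using f by (rule mrank_le) (simp add: card_mono f)
  ultimately show ?thesis by simp
qed

lemma rank_ge: "indep X \<Longrightarrow> card X \<le> matroid_rank E indep"
  unfolding matroid_rank_def using mrank_ge fin M1 by blast

lemma rank_ex: "\<exists>T. indep T \<and> card T = matroid_rank E indep"
proof -
  have "Max {card Y |Y. Y \<subseteq> E \<and> indep Y} \<in> {card Y |Y. Y \<subseteq> E \<and> indep Y}"
    using mrank_fin[OF fin] M2 by (intro Max_in) auto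
  thus ?thesis unfolding matroid_rank_def mrank_def by auto
qed

lemma extend_aux: "\<forall>J. matroid_rank E indep - card J = n \<longrightarrow> indep J \<longrightarrow> J \<subseteq> Z \<longrightarrow> indep T \<longrightarrow> T \<subseteq> Z
   \<longrightarrow> card T = matroid_rank E indep
   \<longrightarrow> (\<exists>B. indep B \<and> card B = matroid_rank E indep \<and> J \<subseteq> B \<and> B \<subseteq> Z)"
proof (induction n)
  case 0
  show ?case
  proof (intro allI impI)
    fix J assume a: "matroid_rank E indep - card J = 0" "indep J" "J \<subseteq> Z"
    have "card J = matroid_rank E indep" using a(1) rank_ge[OF a(2)] by simp
    thus "\<exists>B. indep B \<and> card B = matroid_rank E indep \<and> J \<subseteq> B \<and> B \<subseteq> Z" using a by blast
  qed
next
  case (Suc n)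
  show ?case
  proof (intro allI impI)
    fix J assume a: "matroid_rank E indep - card J = Suc n" "indep J" "J \<subseteq> Z" "indep T" "T \<subseteq> Z"
      "card T = matroid_rank E indep"
    have "card J < card T" using a(1) a(6) by auto
    then obtain x where x: "x \<in> T - J" "indep (insert x J)" using M4[of J T] a by auto
    have "card (insert x J) = Suc (card J)" using x finI[OF a(2)] by auto
    hence "matroid_rank E indep - card (insert x J) = n" using a(1) by auto
    then obtain B where "indep B \<and> card B = matroid_rank E indep \<and> insert x J \<subseteq> B \<and> B \<subseteq> Z"
      using Suc.IH[rule_format, of "insert x J", OF _ x(2) _ a(4) a(5) a(6)] x a(3) a(5) \<open>matroid_rank E indep - card (insert x J) = n\<close> by blast
    thus "\<exists>B. indep B \<and> card B = matroid_rank E indep \<and> J \<subseteq> B \<and> B \<subseteq> Z" by blast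
  qed
qed

lemma extend: "indep J \<Longrightarrow> J \<subseteq> Z \<Longrightarrow> indep T \<Longrightarrow> T \<subseteq> Z \<Longrightarrow> card T = matroid_rank E indep
   \<Longrightarrow> \<exists>B. indep B \<and> card B = matroid_rank E indep \<and> J \<subseteq> B \<and> B \<subseteq> Z"
  using extend_aux[of "matroid_rank E indep - card J" Z T] by blast

lemma bases_iff: "B \<in> bases indep \<longleftrightarrow> indep B \<and> card B = matroid_rank E indep"
proof
  assume b: "B \<in> bases indep"
  hence ib: "indep B" unfolding bases_def by auto
  obtain T where T: "indep T" "card T = matroid_rank E indep" using rank_ex by auto
  have "card B = matroid_rank E indep"
  proof (rule ccontr)
    assume "card B \<noteq> matroid_rank E indep"
    hence "card B < card T" using rank_ge[OF ib] T by auto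
    then obtain x where x: "x \<in> T - B" "indep (insert x B)" using M4[OF ib T(1)] by auto
    have "\<forall>C. indep C \<and> B \<subseteq> C \<longrightarrow> C = B" using b unfolding bases_def by blast
    hence "insert x B = B" using x(2) by blast
    thus False using x(1) by blast
  qed
  thus "indep B \<and> card B = matroid_rank E indep" using ib by auto
next
  assume a: "indep B \<and> card B = matroid_rank E indep"
  show "B \<in> bases indep" unfolding bases_def
  proof (safe)
    show "indep B" using a by auto
    fix C x assume c: "indep C" "B \<subseteq> C" "x \<in> C"
    have "card C \<le> card B" using rank_ge[OF c(1)] a by simp
    hence "card B = card C" using card_mono[OF finI[OF c(1)] c(2)] by simp
    hence "B = C" using card_subset_eq[OF finI[OF c(1)] c(2)] by simp
    thus "x \<in> B" using c by auto
  qed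
qed

lemma K_char:
  assumes "indep X" "card X = matroid_rank E indep - 1" "matroid_rank E indep > 0"
  shows "Kset E indep X = {a. a \<notin> X \<and> insert a X \<in> bases indep}"
proof (intro set_eqI iffI)
  fix a assume "a \<in> Kset E indep X"
  hence a: "a \<in> E" "mrank indep (insert a X) = card X + 1"
    unfolding Kset_def using mrank_indep[OF assms(1)] by auto
  have fX: "finite X" using finI assms(1) by auto
  have nX: "a \<notin> X" using a(2) mrank_indep[OF assms(1)] by (auto simp: insert_absorb)
  have "indep (insert a X)"
  proof (rule ccontr)
    assume ni: "\<not> indep (insert a X)"
    have "mrank indep (insert a X) \<le> card X"
    proof (rule mrank_le)
      show "finite (insert a X)" using fX by auto
      fix Y assume y: "Y \<subseteq> insert a X" "indep Y"
      hence "Y \<noteq> insert a X" using ni by auto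
      hence "card Y < card (insert a X)" using y fX by (meson finite.insertI psubsetI psubset_card_mono)
      thus "card Y \<le> card X" using nX fX by auto
    qed
    thus False using a by auto
  qed
  moreover have "card (insert a X) = matroid_rank E indep" using nX fX assms by auto
  ultimately show "a \<in> {a. a \<notin> X \<and> insert a X \<in> bases indep}" using bases_iff nX by auto
next
  fix a assume "a \<in> {a. a \<notin> X \<and> insert a X \<in> bases indep}"
  hence a: "a \<notin> X" "indep (insert a X)" using bases_iff by auto
  have fX: "finite X" using finI assms(1) by auto
  show "a \<in> Kset E indep X" unfolding Kset_def
    using a M1[OF a(2)] mrank_indep[OF a(2)] mrank_indep[OF assms(1)] fX by auto
qed

end

theorem theorem4:
  fixes E :: "'a set" and indep :: "'a set \<Rightarrow> bool"
  assumes "finite E"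
    and "matroid E indep"
    and "matroid_rank E indep > 0"
  shows "partition_on (\<Union>(bases indep)) (forming_bases E indep) \<longleftrightarrow> unique_expansion E indep"
proof -
  note fin = assms(1) and M = assms(2) and rpos = assms(3)
  let ?r = "matroid_rank E indep"
  let ?K = "Kset E indep"
  let ?s = "secondary_bases E indep"
  have S: "\<And>X. X \<in> ?s \<longleftrightarrow> indep X \<and> card X = ?r - 1" by (simp add: secondary_bases_def)
  have K: "\<And>X. X \<in> ?s \<Longrightarrow> ?K X = {a. a \<notin> X \<and> insert a X \<in> bases indep}"
  proof -
    fix X assume "X \<in> ?s"
    hence "indep X" "card X = ?r - 1" using S by auto
    thus "?K X = {a. a \<notin> X \<and> insert a X \<in> bases indep}" using K_char[OF fin M _ _ rpos] by blast
  qed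
  have BI: "\<And>B. B \<in> bases indep \<longleftrightarrow> indep B \<and> card B = ?r" by (rule bases_iff[OF fin M])
  have key: "f \<in> ?K Y"
    if UE: "unique_expansion E indep" and XY: "X \<in> ?s" "Y \<in> ?s"
      and e: "e \<in> ?K X" "e \<in> ?K Y" and f: "f \<in> ?K X" for X Y e f
  proof (rule ccontr)
    assume nf: "f \<notin> ?K Y"
    have eX: "e \<notin> X" "insert e X \<in> bases indep" using e K XY by auto
    have eY: "e \<notin> Y" "insert e Y \<in> bases indep" using e K XY by auto
    have fX: "f \<notin> X" "insert f X \<in> bases indep" using f K XY by auto
    have iY: "indep Y" "card Y = ?r - 1" using XY S by auto
    have fY: "finite Y" using finI[OF fin M iY(1)] .
    have "indep {f}" using fX BI M3[OF fin M, of "insert f X" "{f}"] by auto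
    moreover have "indep (insert e Y)" "card (insert e Y) = ?r" using eY BI by auto
    ultimately obtain B where B: "indep B" "card B = ?r" "{f} \<subseteq> B" "B \<subseteq> insert e (insert f Y)"
      using extend[OF fin M, of "{f}" "insert e (insert f Y)" "insert e Y"] by auto
    have fB: "finite B" using finI[OF fin M B(1)] .
    have "e \<in> B"
    proof (rule ccontr)
      assume "e \<notin> B"
      hence sub: "B \<subseteq> insert f Y" using B(4) by auto
      show False
      proof (cases "f \<in> Y")
        case True
        hence "card B \<le> card Y" using sub card_mono[OF fY] by (simp add: insert_absorb)
        thus False using B(2) iY rpos by auto
      next
        case False
        hence "card (insert f Y) = ?r" using fY iY rpos by auto
        hence "B = insert f Y" using card_subset_eq[OF _ sub] fY B(2) by auto
        hence "insert f Y \<in> bases indep" using B BI by auto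
        thus False using nf K XY False by auto
      qed
    qed
    have "B \<in> bases indep" using B BI by auto
    hence "e = f" using UE XY(1) \<open>e \<in> B\<close> B(3) eX fX unfolding unique_expansion_def by auto
    thus False using nf e by auto
  qed
  show ?thesis
  proof
    assume P: "partition_on (\<Union>(bases indep)) (forming_bases E indep)"
    show "unique_expansion E indep" unfolding unique_expansion_def
    proof (intro ballI allI impI)
      fix B A e1 e2
      assume B: "B \<in> bases indep" and A: "A \<in> ?s"
        and h: "e1 \<in> B \<and> e2 \<in> B \<and> A \<union> {e1} \<in> bases indep \<and> A \<union> {e2} \<in> bases indep"
      show "e1 = e2"
      proof (rule ccontr)
        assume ne: "e1 \<noteq> e2"
        have iA: "indep A" "card A = ?r - 1" using A S by auto
        have nA1: "e1 \<notin> A"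
        proof
          assume "e1 \<in> A" hence "A \<union> {e1} = A" by blast
          hence "card A = ?r" using h BI by metis
          thus False using iA rpos by simp
        qed
        have nA2: "e2 \<notin> A"
        proof
          assume "e2 \<in> A" hence "A \<union> {e2} = A" by blast
          hence "card A = ?r" using h BI by metis
          thus False using iA rpos by simp
        qed
        note nA = nA1 nA2
        have k1: "e1 \<in> ?K A" "e2 \<in> ?K A" using K[OF A] nA h by auto
        define Y where "Y = B - {e1}"
        have iB: "indep B" "card B = ?r" using B BI by auto
        have fB: "finite B" using finI[OF fin M iB(1)] .
        have "card Y = ?r - 1" using iB h fB unfolding Y_def by (simp add: card_Diff_singleton)
        moreover have "indep Y" using M3[OF fin M iB(1), of Y] unfolding Y_def by blast
        ultimately have YS: "Y \<in> ?s" using S by blast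
        have "insert e1 Y = B" using h unfolding Y_def by blast
        moreover have "e1 \<notin> Y" unfolding Y_def by blast
        ultimately have y1: "e1 \<in> ?K Y" using K[OF YS] B by simp
        have "e2 \<in> Y" using h ne unfolding Y_def by blast
        hence y2: "e2 \<notin> ?K Y" using K[OF YS] by simp
        have mem: "?K A \<in> forming_bases E indep" "?K Y \<in> forming_bases E indep"
          using A YS unfolding forming_bases_def by auto
        have "?K A \<noteq> ?K Y" using k1 y2 by auto
        hence "?K A \<inter> ?K Y = {}" using disjointD[OF partition_onD2[OF P] mem] by auto
        thus False using k1 y1 by auto
      qed
    qed
  next
    assume UE: "unique_expansion E indep"
    show "partition_on (\<Union>(bases indep)) (forming_bases E indep)"
    proof (rule partition_onI)
      show "\<Union>(forming_bases E indep) = \<Union>(bases indep)"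
      proof (intro set_eqI iffI)
        fix a assume "a \<in> \<Union>(forming_bases E indep)"
        then obtain X where X: "X \<in> ?s" "a \<in> ?K X" unfolding forming_bases_def by auto
        thus "a \<in> \<Union>(bases indep)" using K by auto
      next
        fix a assume "a \<in> \<Union>(bases indep)"
        then obtain B where B: "B \<in> bases indep" "a \<in> B" by auto
        have iB: "indep B" "card B = ?r" using B BI by auto
        have fB: "finite B" using finI[OF fin M iB(1)] .
        have "card (B - {a}) = ?r - 1" using iB B fB by (simp add: card_Diff_singleton)
        moreover have "indep (B - {a})" using M3[OF fin M iB(1), of "B - {a}"] by blast
        ultimately have YS: "B - {a} \<in> ?s" using S by blast
        have "insert a (B - {a}) = B" using B by blast
        hence "a \<in> ?K (B - {a})" using K[OF YS] B by simp
        thus "a \<in> \<Union>(forming_bases E indep)" using YS unfolding forming_bases_def by auto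
      qed
    next
      fix p q assume pq: "p \<in> forming_bases E indep" "q \<in> forming_bases E indep" "p \<noteq> q"
      then obtain X Y where XY: "X \<in> ?s" "Y \<in> ?s" "p = ?K X" "q = ?K Y" unfolding forming_bases_def by auto
      show "disjnt p q"
      proof (rule ccontr)
        assume "\<not> disjnt p q"
        then obtain e where "e \<in> p" "e \<in> q" unfolding disjnt_def by auto
        have "p \<subseteq> q"
        proof
          fix f assume "f \<in> p"
          thus "f \<in> q" using key[OF UE XY(1) XY(2), of e f] \<open>e \<in> p\<close> \<open>e \<in> q\<close> XY(3,4) by simp
        qed
        moreover have "q \<subseteq> p"
        proof
          fix f assume "f \<in> q"
          thus "f \<in> p" using key[OF UE XY(2) XY(1), of e f] \<open>e \<in> p\<close> \<open>e \<in> q\<close> XY(3,4) by simp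
        qed
        ultimately
        show False using pq by auto
      qed
    next
      show "{} \<notin> forming_bases E indep"
      proof
        assume "{} \<in> forming_bases E indep"
        then obtain X where X: "X \<in> ?s" "?K X = {}" unfolding forming_bases_def by auto
        have iX: "indep X" "card X = ?r - 1" using X S by auto
        obtain T where T: "indep T" "card T = ?r" using rank_ex[OF fin M] by auto
        obtain B where B: "indep B" "card B = ?r" "X \<subseteq> B" "B \<subseteq> E"
          using extend[OF fin M iX(1) M1[OF fin M iX(1)] T(1) M1[OF fin M T(1)] T(2)] by auto
        have fB: "finite B" using finI[OF fin M B(1)] .
        have "X \<noteq> B" using iX B rpos by auto
        then obtain a where a: "a \<in> B" "a \<notin> X" using B(3) by auto
        have ia: "indep (insert a X)" using M3[OF fin M B(1)] a B(3) by auto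
        have "card (insert a X) = ?r" using a iX rpos finite_subset[OF B(3) fB] by auto
        hence "a \<in> ?K X" using K[OF X(1)] a ia BI by auto
        thus False using X by auto
      qed
    qed
  qed
qed

end
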